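(* Let $\mathbf{H}\in\mathbb{R}^{m\times n}$ have full column rank and let $\mathcal{S}_A,\mathcal{S}_F\subseteq\{1,\dots,m\}$ be disjoint, $\mathcal{A}=\{\mathbf{a}\in\mathbb{R}^m: a_i=0\ \forall i\notin\mathcal{S}_A\}$. Let $\mathbf{U}\in\mathbb{R}^{m\times n}$ be any matrix whose columns form a basis of $\mathcal{R}(\mathbf{H})$. Define $\tilde{\mathbf{W}}=\mathbf{I}-\mathbf{U}(\mathbf{U}^T\mathbf{U})^{-1}\mathbf{U}^T$, the diagonal matrix $\tilde{\mathbf{\Omega}}\in\mathbb{R}^{m\times m}$ with $\tilde{\mathbf{\Omega}}_{ii}=1/\sqrt{\tilde{\mathbf{W}}_{ii}}$ if $\tilde{\mathbf{W}}_{ii}>0$ and $\tilde{\mathbf{\Omega}}_{ii}=0$ if $\tilde{\mathbf{W}}_{ii}=0$, the row selection matrix $\mathbf{I}_{\mathcal{S}_F}\in\mathbb{R}^{|\mathcal{S}_F|\times m}$ retaining the rows indexed by $\mathcal{S}_F$, and $\mathbf{U}_1$ (resp. $\mathbf{H}_1$) obtained from $\mathbf{U}$ (resp. $\mathbf{H}$) by replacing the rows indexed by $\mathcal{S}_F$ with zero rows. Consider (P1) maximize $\mathbb{E}\big[\sum_{i\in\mathcal{S}_F}\tilde r_i^2\big]$ over $\mathbf{a}$ subject to $\|\mathbf{a}\|_2^2=1$, $\mathbf{a}\in\mathcal{R}(\mathbf{H}_1)\cap\mathcal{A}$, (P2) maximize $\|\mathbf{I}_{\mathcal{S}_F}\tilde{\mathbf{\Omega}}\tilde{\mathbf{W}}\mathbf{a}\|_2^2$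 over $\mathbf{a}$ subject to $\|\mathbf{a}\|_2^2=1$, $\mathbf{a}\in\mathcal{R}(\mathbf{U}_1)\cap\mathcal{A}$, where in (P1) $\tilde{\mathbf{r}}$ is the normalized residue vector defined in the context. Then a vector is a solution of (P2) if and only if it is a solution of (P1).
   Context: Measurement model: $\mathbf{z}=\mathbf{H}\mathbf{x}+\mathbf{e}$ with fixed state $\mathbf{x}$ and $\mathbf{e}\sim\mathcal{N}(\mathbf{0},\sigma^2\mathbf{I})$; the adversary adds $\mathbf{a}\in\mathcal{A}$, giving $\mathbf{z}+\mathbf{a}$. Let $\mathbf{W}=\mathbf{I}-\mathbf{H}(\mathbf{H}^T\mathbf{H})^{-1}\mathbf{H}^T$; the residue is $\mathbf{r}=\mathbf{W}(\mathbf{z}+\mathbf{a})$ and the normalized residue is $\tilde{\mathbf{r}}=\mathbf{\Omega}\mathbf{r}$, where $\mathbf{\Omega}$ is diagonal with $\mathbf{\Omega}_{ii}=0$ if removing row $i$ from $\mathbf{H}$ makes it lose full column rank, and $\mathbf{\Omega}_{ii}=1/\sqrt{\sigma^2\mathbf{W}_{ii}}$ otherwise. The expectation in (P1) is over $\mathbf{e}$. $\mathcal{S}_A$ is the set of adversary-controlled sensors and $\mathcal{S}_F$ the set of sensors to be framed (made to appear as bad data). *)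

theory Defs
  imports "HOL-Analysis.Analysis" "HOL-Probability.Probability"
begin

definition full_col_rank :: "real^'n^'m \<Rightarrow> bool" where
  "full_col_rank H \<longleftrightarrow> rank H = CARD('n)"

definition col_space :: "real^'n^'m \<Rightarrow> (real^'m) set" where
  "col_space H = range (\<lambda>x. H *v x)"

definition zero_rows :: "'m set \<Rightarrow> real^'n^'m \<Rightarrow> real^'n^'m" where
  "zero_rows S H = (\<chi> i. if i \<in> S then 0 else H $ i)"

definition resid_proj :: "real^'n^'m \<Rightarrow> real^'m^'m" where
  "resid_proj H = mat 1 - H ** matrix_inv (transpose H ** H) ** transpose H"

text \<open>Since dimensions
  are types, "removing" row i is rendered as replacing it by a zero row, which
  yields a matrix with the same rank as the one with row i deleted.\<close>
definition loses_rank_without_row :: "real^'n^'m \<Rightarrow> 'm \<Rightarrow> bool" where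
  "loses_rank_without_row H i \<longleftrightarrow> \<not> full_col_rank (zero_rows {i} H)"

text \<open>Normalization matrix Omega of the context (noise std. deviation sigma).\<close>
definition Omega :: "real \<Rightarrow> real^'n^'m \<Rightarrow> real^'m^'m" where
  "Omega \<sigma> H = (\<chi> i j. if i = j \<and> \<not> loses_rank_without_row H i
       then 1 / sqrt (\<sigma>\<^sup>2 * resid_proj H $ i $ i) else 0)"

definition Omega_tilde :: "real^'m^'m \<Rightarrow> real^'m^'m" where
  "Omega_tilde W = (\<chi> i j. if i = j \<and> W $ i $ i > 0 then 1 / sqrt (W $ i $ i) else 0)"

text \<open>Squared Euclidean norm of I_S v (row selection of the entries indexed by S).\<close>
definition sel_norm2 :: "'m set \<Rightarrow> real^'m \<Rightarrow> real" where
  "sel_norm2 S v = (\<Sum>i\<in>S. (v $ i)\<^sup>2)"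

definition attack_space :: "'m set \<Rightarrow> (real^'m) set" where
  "attack_space SA = {a. \<forall>i. i \<notin> SA \<longrightarrow> a $ i = 0}"

definition noise_measure :: "real \<Rightarrow> ('m::finite \<Rightarrow> real) measure" where
  "noise_measure \<sigma> = PiM UNIV (\<lambda>_. density lborel (normal_density 0 \<sigma>))"

text \<open>Objective of (P1): E over e of sum_{i in S_F} tilde r_i^2, where
  tilde r = Omega W (H x + e + a).\<close>
definition P1_obj :: "real \<Rightarrow> real^'n^'m \<Rightarrow> real^'n \<Rightarrow> 'm set \<Rightarrow> real^'m \<Rightarrow> real" where
  "P1_obj \<sigma> H x SF a =
     (\<integral>e. (\<Sum>i\<in>SF. (((Omega \<sigma> H ** resid_proj H) *v (H *v x + vec_lambda e + a)) $ i)\<^sup>2)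
        \<partial>(noise_measure \<sigma>))"

definition is_max_sol :: "('a \<Rightarrow> real) \<Rightarrow> 'a set \<Rightarrow> 'a \<Rightarrow> bool" where
  "is_max_sol f C a \<longleftrightarrow> a \<in> C \<and> (\<forall>b\<in>C. f b \<le> f a)"

end

theory Submission
  imports Defs
begin


lemma noise_prob: "prob_space (noise_measure \<sigma> :: ('m::finite \<Rightarrow> real) measure)" if "\<sigma> > 0"
  unfolding noise_measure_def
  by (rule prob_space_PiM) (rule prob_space_normal_density[OF that])

lemma noise_meas[measurable]: "(\<lambda>e. e j) \<in> borel_measurable (noise_measure \<sigma> :: ('m::finite \<Rightarrow> real) measure)"
  unfolding noise_measure_def by measurable

lemma noise_comp:
  fixes f :: "real \<Rightarrow> real"
  assumes "\<sigma> > 0" and f[measurable]: "f \<in> borel_measurable borel"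
  shows "integral\<^sup>L (noise_measure \<sigma> :: ('m::finite \<Rightarrow> real) measure) (\<lambda>e. f (e j))
           = (\<integral>x. normal_density 0 \<sigma> x * f x \<partial>lborel)"
    and "integrable (noise_measure \<sigma> :: ('m::finite \<Rightarrow> real) measure) (\<lambda>e. f (e j))
           \<longleftrightarrow> integrable lborel (\<lambda>x. normal_density 0 \<sigma> x * f x)"
proof -
  let ?N = "density lborel (normal_density 0 \<sigma>)"
  have d: "distr (noise_measure \<sigma> :: ('m::finite \<Rightarrow> real) measure) ?N (\<lambda>e. e j) = ?N"
    unfolding noise_measure_def
    by (rule distr_PiM_component) (auto intro: prob_space_normal_density[OF assms(1)])
  have m: "(\<lambda>e. e j) \<in> measurable (noise_measure \<sigma> :: ('m::finite \<Rightarrow> real) measure) ?N"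
    unfolding noise_measure_def by measurable
  have fm: "f \<in> borel_measurable ?N" by simp
  show "integral\<^sup>L (noise_measure \<sigma> :: ('m::finite \<Rightarrow> real) measure) (\<lambda>e. f (e j))
           = (\<integral>x. normal_density 0 \<sigma> x * f x \<partial>lborel)"
    using integral_distr[OF m fm] d integral_real_density[of "normal_density 0 \<sigma>" lborel f]
    by simp
  show "integrable (noise_measure \<sigma> :: ('m::finite \<Rightarrow> real) measure) (\<lambda>e. f (e j))
           \<longleftrightarrow> integrable lborel (\<lambda>x. normal_density 0 \<sigma> x * f x)"
    using integrable_distr_eq[OF m fm] d integrable_real_density[of "normal_density 0 \<sigma>" lborel f]
    by simp
qed

lemma noise_mom:
  assumes "\<sigma> > 0"
  shows "integrable (noise_measure \<sigma> :: ('m::finite \<Rightarrow> real) measure) (\<lambda>e. e j)"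
    and "integral\<^sup>L (noise_measure \<sigma> :: ('m::finite \<Rightarrow> real) measure) (\<lambda>e. e j) = 0"
    and "integrable (noise_measure \<sigma> :: ('m::finite \<Rightarrow> real) measure) (\<lambda>e. (e j)^2)"
proof -
  show "integrable (noise_measure \<sigma> :: ('m::finite \<Rightarrow> real) measure) (\<lambda>e. e j)"
    using noise_comp(2)[OF assms, of "\<lambda>x. x" j] integrable_normal_moment_nz_1[OF assms, of 0] by simp
  show "integral\<^sup>L (noise_measure \<sigma> :: ('m::finite \<Rightarrow> real) measure) (\<lambda>e. e j) = 0"
    using noise_comp(1)[OF assms, of "\<lambda>x. x" j] integral_normal_moment_nz_1[OF assms, of 0] by simp
  show "integrable (noise_measure \<sigma> :: ('m::finite \<Rightarrow> real) measure) (\<lambda>e. (e j)^2)"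
    using noise_comp(2)[OF assms, of "\<lambda>x. x^2" j] integrable_normal_moment[OF assms, of 0 2] by simp
qed

lemma noise_prod:
  assumes "\<sigma> > 0"
  shows "integrable (noise_measure \<sigma> :: ('m::finite \<Rightarrow> real) measure) (\<lambda>e. e j * e k)"
proof (rule Bochner_Integration.integrable_bound)
  show "integrable (noise_measure \<sigma> :: ('m::finite \<Rightarrow> real) measure) (\<lambda>e. (e j)^2 + (e k)^2)"
    using noise_mom(3)[OF assms] by (intro Bochner_Integration.integrable_add)
  show "(\<lambda>e. e j * e k) \<in> borel_measurable (noise_measure \<sigma> :: ('m::finite \<Rightarrow> real) measure)"
    by measurable
  show "AE e in noise_measure \<sigma>. norm (e j * e k) \<le> norm ((e j)^2 + (e k)^2)"
  proof (rule AE_I2)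
    fix e :: "'m \<Rightarrow> real"
    have h: "0 \<le> (\<bar>e j\<bar> - \<bar>e k\<bar>)^2" by simp
    hence h2: "2 * (\<bar>e j\<bar> * \<bar>e k\<bar>) \<le> \<bar>e j\<bar>^2 + \<bar>e k\<bar>^2" by (simp add: power2_diff)
    have h3: "0 \<le> \<bar>e j\<bar> * \<bar>e k\<bar>" by simp
    have "\<bar>e j * e k\<bar> \<le> (e j)^2 + (e k)^2" using h2 h3 unfolding abs_mult power2_abs by linarith
    then show "norm (e j * e k) \<le> norm ((e j)^2 + (e k)^2)"
      by simp
  qed
qed

lemma noise_lin:
  assumes "\<sigma> > 0"
  shows "integrable (noise_measure \<sigma> :: ('m::finite \<Rightarrow> real) measure) (\<lambda>e. \<Sum>j\<in>UNIV. c j * e j)"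
    and "integral\<^sup>L (noise_measure \<sigma> :: ('m::finite \<Rightarrow> real) measure) (\<lambda>e. \<Sum>j\<in>UNIV. c j * e j) = 0"
    and "integrable (noise_measure \<sigma> :: ('m::finite \<Rightarrow> real) measure) (\<lambda>e. (\<Sum>j\<in>UNIV. c j * e j)^2)"
proof -
  show i1: "integrable (noise_measure \<sigma> :: ('m::finite \<Rightarrow> real) measure) (\<lambda>e. \<Sum>j\<in>UNIV. c j * e j)"
    by (intro Bochner_Integration.integrable_sum Bochner_Integration.integrable_mult_right noise_mom(1)[OF assms])
  show "integral\<^sup>L (noise_measure \<sigma> :: ('m::finite \<Rightarrow> real) measure) (\<lambda>e. \<Sum>j\<in>UNIV. c j * e j) = 0"
  proof -
    have "integral\<^sup>L (noise_measure \<sigma> :: ('m::finite \<Rightarrow> real) measure) (\<lambda>e. \<Sum>j\<in>UNIV. c j * e j)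
       = (\<Sum>j\<in>UNIV. integral\<^sup>L (noise_measure \<sigma> :: ('m::finite \<Rightarrow> real) measure) (\<lambda>e. c j * e j))"
      by (rule Bochner_Integration.integral_sum) (intro Bochner_Integration.integrable_mult_right noise_mom(1)[OF assms])
    also have "\<dots> = 0" by (simp add: noise_mom(2)[OF assms])
    finally show ?thesis .
  qed
  have eq: "(\<lambda>e. (\<Sum>j\<in>UNIV. c j * e j)^2) = (\<lambda>e::'m\<Rightarrow>real. \<Sum>j\<in>UNIV. \<Sum>k\<in>UNIV. c j * c k * (e j * e k))"
    by (auto simp: power2_eq_square sum_product intro!: sum.cong ext)
  show "integrable (noise_measure \<sigma> :: ('m::finite \<Rightarrow> real) measure) (\<lambda>e. (\<Sum>j\<in>UNIV. c j * e j)^2)"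
    unfolding eq by (intro Bochner_Integration.integrable_sum Bochner_Integration.integrable_mult_right noise_prod[OF assms])
qed

lemma noise_quad:
  assumes "\<sigma> > 0" "finite S"
  shows "integral\<^sup>L (noise_measure \<sigma> :: ('m::finite \<Rightarrow> real) measure)
           (\<lambda>e. \<Sum>i\<in>S. ((\<Sum>j\<in>UNIV. c i j * e j) + d i)^2)
       = integral\<^sup>L (noise_measure \<sigma> :: ('m::finite \<Rightarrow> real) measure)
           (\<lambda>e. \<Sum>i\<in>S. (\<Sum>j\<in>UNIV. c i j * e j)^2) + (\<Sum>i\<in>S. (d i)^2)"
proof -
  let ?M = "noise_measure \<sigma> :: ('m::finite \<Rightarrow> real) measure"
  interpret prob_space ?M by (rule noise_prob[OF assms(1)])
  have one: "integral\<^sup>L ?M (\<lambda>e. ((\<Sum>j\<in>UNIV. c i j * e j) + d i)^2)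
       = integral\<^sup>L ?M (\<lambda>e. (\<Sum>j\<in>UNIV. c i j * e j)^2) + (d i)^2" for i
  proof -
    have eq: "(\<lambda>e. ((\<Sum>j\<in>UNIV. c i j * e j) + d i)^2) = (\<lambda>e::'m\<Rightarrow>real. (\<Sum>j\<in>UNIV. c i j * e j)^2
       + (2 * d i) * (\<Sum>j\<in>UNIV. c i j * e j) + (d i)^2)"
      by (auto simp: power2_eq_square algebra_simps)
    show ?thesis unfolding eq
      using noise_lin[OF assms(1), of "c i"]
      by (simp add: prob_space)
  qed
  have "integral\<^sup>L ?M (\<lambda>e. \<Sum>i\<in>S. ((\<Sum>j\<in>UNIV. c i j * e j) + d i)^2)
      = (\<Sum>i\<in>S. integral\<^sup>L ?M (\<lambda>e. ((\<Sum>j\<in>UNIV. c i j * e j) + d i)^2))"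
  proof (rule Bochner_Integration.integral_sum)
    fix i assume "i \<in> S"
    have eq: "(\<lambda>e. ((\<Sum>j\<in>UNIV. c i j * e j) + d i)^2) = (\<lambda>e::'m\<Rightarrow>real. (\<Sum>j\<in>UNIV. c i j * e j)^2
       + (2 * d i) * (\<Sum>j\<in>UNIV. c i j * e j) + (d i)^2)"
      by (auto simp: power2_eq_square algebra_simps)
    show "integrable ?M (\<lambda>e. ((\<Sum>j\<in>UNIV. c i j * e j) + d i)^2)"
      unfolding eq using noise_lin[OF assms(1), of "c i"] by auto
  qed
  also have "\<dots> = (\<Sum>i\<in>S. integral\<^sup>L ?M (\<lambda>e. (\<Sum>j\<in>UNIV. c i j * e j)^2)) + (\<Sum>i\<in>S. (d i)^2)"
    by (simp add: one sum.distrib)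
  also have "(\<Sum>i\<in>S. integral\<^sup>L ?M (\<lambda>e. (\<Sum>j\<in>UNIV. c i j * e j)^2))
     = integral\<^sup>L ?M (\<lambda>e. \<Sum>i\<in>S. (\<Sum>j\<in>UNIV. c i j * e j)^2)"
    by (rule Bochner_Integration.integral_sum[symmetric]) (use noise_lin[OF assms(1)] in auto)
  finally show ?thesis .
qed



lemma matrix_sub_ldistrib: "(A::real^'n^'m) ** (B - C) = A ** B - A ** C"
  by (vector matrix_matrix_mult_def sum_subtractf field_simps)

lemma matrix_sub_rdistrib: "((B::real^'n^'m) - C) ** A = B ** A - C ** A"
  by (vector matrix_matrix_mult_def sum_subtractf field_simps)

lemma transpose_sub: "transpose ((A::real^'n^'m) - B) = transpose A - transpose B"
  by (simp add: transpose_def vec_eq_iff)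

lemma minv_props:
  fixes A :: "real^'n^'n" assumes "invertible A"
  shows "A ** matrix_inv A = mat 1" "matrix_inv A ** A = mat 1"
  using someI_ex[OF assms[unfolded invertible_def]] unfolding matrix_inv_def by auto

lemma minv_unique:
  fixes A B :: "real^'n^'n" assumes "B ** A = mat 1"
  shows "matrix_inv A = B"
proof -
  have inv: "invertible A" using assms invertible_left_inverse by blast
  have "B = B ** (A ** matrix_inv A)" using minv_props(1)[OF inv] by simp
  also have "\<dots> = matrix_inv A" by (simp add: matrix_mul_assoc assms)
  finally show ?thesis by simp
qed

lemma gram_inv:
  fixes H :: "real^'n^'m" assumes inj: "inj ((*v) H)"
  shows "invertible (transpose H ** H)"
proof -
  have "\<forall>x. (transpose H ** H) *v x = 0 \<longrightarrow> x = 0"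
  proof (intro allI impI)
    fix x assume "(transpose H ** H) *v x = 0"
    hence "x \<bullet> (transpose H *v (H *v x)) = 0" by (simp add: matrix_vector_mul_assoc)
    hence "(H *v x) \<bullet> (H *v x) = 0"
      using dot_lmul_matrix[of x "transpose H" "H *v x"] by simp
    hence "H *v x = H *v 0" by simp
    thus "x = 0" using injD[OF inj] by blast
  qed
  thus ?thesis using matrix_left_invertible_ker invertible_left_inverse by blast
qed

lemma proj_facts:
  fixes H :: "real^'n^'m" assumes inj: "inj ((*v) H)"
  shows "resid_proj H ** H = 0"
    and "transpose (resid_proj H) = resid_proj H"
    and "resid_proj H ** resid_proj H = resid_proj H"
proof -
  define G where "G = matrix_inv (transpose H ** H)"
  define P where "P = H ** G ** transpose H"
  have W: "resid_proj H = mat 1 - P" unfolding resid_proj_def P_def G_def ..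
  have G1: "G ** (transpose H ** H) = mat 1" and G2: "(transpose H ** H) ** G = mat 1"
    using minv_props[OF gram_inv[OF inj]] unfolding G_def by auto
  have "transpose G ** (transpose H ** H) = mat 1"
    using arg_cong[OF G2, of transpose] by (simp add: matrix_transpose_mul matrix_mul_assoc)
  hence GT: "transpose G = G" unfolding G_def using minv_unique by metis
  have PH: "P ** H = H"
    unfolding P_def by (metis G1 matrix_mul_assoc matrix_mul_rid)
  show "resid_proj H ** H = 0" unfolding W matrix_sub_rdistrib PH by simp
  have PT: "transpose P = P"
    unfolding P_def by (simp add: matrix_transpose_mul GT matrix_mul_assoc)
  show "transpose (resid_proj H) = resid_proj H" unfolding W transpose_sub PT by simp
  have PP: "P ** P = P"
    unfolding P_def by (metis PH P_def matrix_mul_assoc)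
  show "resid_proj H ** resid_proj H = resid_proj H"
    unfolding W matrix_sub_rdistrib matrix_sub_ldistrib PP by simp
qed

lemma diag_sq:
  fixes H :: "real^'n^'m" assumes inj: "inj ((*v) H)"
  shows "resid_proj H $ i $ i = (\<Sum>k\<in>UNIV. (resid_proj H $ i $ k)^2)"
proof -
  let ?W = "resid_proj H"
  have "?W $ i $ i = (?W ** ?W) $ i $ i" using proj_facts(3)[OF inj] by simp
  also have "\<dots> = (\<Sum>k\<in>UNIV. ?W $ i $ k * ?W $ k $ i)" by (simp add: matrix_matrix_mult_def)
  also have "\<dots> = (\<Sum>k\<in>UNIV. (?W $ i $ k)^2)"
  proof (rule sum.cong)
    fix k
    have "?W $ k $ i = transpose ?W $ i $ k" by (simp add: transpose_def)
    also have "\<dots> = ?W $ i $ k" using proj_facts(2)[OF inj] by simp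
    finally show "?W $ i $ k * ?W $ k $ i = (?W $ i $ k)^2" by (simp add: power2_eq_square)
  qed simp
  finally show ?thesis .
qed


lemma cancel_r: "(M::real^'n^'n) ** Mi = mat 1 \<Longrightarrow> (X::real^'n^'k) ** M ** Mi = X"
  by (metis matrix_mul_assoc matrix_mul_rid)

lemma U_factor:
  fixes H U :: "real^'n^'m"
  assumes injH: "inj ((*v) H)" and rU: "rank U = CARD('n)" and cs: "col_space U = col_space H"
  obtains M where "invertible M" "U = H ** M"
proof -
  have "\<forall>j. \<exists>v. H *v v = column j U"
  proof
    fix j
    have "column j U \<in> col_space U" unfolding col_space_def
      using matrix_vector_mult_basis[of U j] by (metis rangeI)
    thus "\<exists>v. H *v v = column j U" using cs unfolding col_space_def by auto
  qed
  then obtain v where v: "\<And>j. H *v v j = column j U" by metis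
  define M :: "real^'n^'n" where "M = (\<chi> k j. v j $ k)"
  have UHM: "U = H ** M"
  proof -
    have "(H ** M) $ i $ j = U $ i $ j" for i j
    proof -
      have "(H ** M) $ i $ j = (H *v v j) $ i"
        by (simp add: M_def matrix_matrix_mult_def matrix_vector_mult_def)
      also have "\<dots> = U $ i $ j" by (simp add: v column_def)
      finally show ?thesis .
    qed
    thus ?thesis by (simp add: vec_eq_iff)
  qed
  have injU: "inj ((*v) U)" using rU full_rank_injective by blast
  have "inj ((*v) M)"
  proof (rule injI)
    fix x y assume "M *v x = M *v y"
    hence "U *v x = U *v y" unfolding UHM by (simp flip: matrix_vector_mul_assoc)
    thus "x = y" using injD[OF injU] by blast
  qed
  hence "invertible M" using matrix_left_invertible_injective invertible_left_inverse by blast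
  thus ?thesis using that UHM by blast
qed

lemma resid_proj_mult:
  fixes H :: "real^'n^'m" and M :: "real^'n^'n"
  assumes injH: "inj ((*v) H)" and iM: "invertible M"
  shows "resid_proj (H ** M) = resid_proj H"
proof -
  define Mi where "Mi = matrix_inv M"
  define G where "G = matrix_inv (transpose H ** H)"
  have M1: "M ** Mi = mat 1" and M2: "Mi ** M = mat 1" using minv_props[OF iM] Mi_def by auto
  have M3: "transpose Mi ** transpose M = mat 1" and M4: "transpose M ** transpose Mi = mat 1"
    using arg_cong[OF M1, of transpose] arg_cong[OF M2, of transpose]
    by (simp_all add: matrix_transpose_mul)
  have G1: "G ** transpose H ** H = mat 1"
    using minv_props(2)[OF gram_inv[OF injH]] unfolding G_def by (simp add: matrix_mul_assoc)
  have c1: "X ** M ** Mi = X" for X :: "real^'n^'k" using cancel_r[OF M1] .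
  have c2: "X ** Mi ** M = X" for X :: "real^'n^'k" using cancel_r[OF M2] .
  have c3: "X ** transpose Mi ** transpose M = X" for X :: "real^'n^'k" using cancel_r[OF M3] .
  have c4: "X ** G ** transpose H ** H = X" for X :: "real^'n^'k"
    using G1 by (metis matrix_mul_assoc matrix_mul_rid)
  have inv: "matrix_inv (transpose (H ** M) ** (H ** M)) = Mi ** G ** transpose Mi"
  proof (rule minv_unique)
    have "Mi ** G ** transpose Mi ** (transpose (H ** M) ** (H ** M))
        = Mi ** G ** transpose Mi ** transpose M ** transpose H ** H ** M"
      by (simp add: matrix_transpose_mul matrix_mul_assoc)
    also have "\<dots> = Mi ** M" by (simp add: c3 c4)
    finally show "Mi ** G ** transpose Mi ** (transpose (H ** M) ** (H ** M)) = mat 1"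
      using M2 by simp
  qed
  have "H ** M ** matrix_inv (transpose (H ** M) ** (H ** M)) ** transpose (H ** M)
      = H ** M ** Mi ** G ** transpose Mi ** transpose M ** transpose H"
    unfolding inv by (simp add: matrix_transpose_mul matrix_mul_assoc)
  also have "\<dots> = H ** G ** transpose H" by (simp add: c1 c3)
  finally show ?thesis unfolding resid_proj_def G_def by simp
qed

lemma zero_rows_mult: "zero_rows S ((A::real^'n^'m) ** (M::real^'k^'n)) = zero_rows S A ** M"
  by (simp add: zero_rows_def matrix_matrix_mult_def vec_eq_iff)

lemma col_space_mult:
  fixes A :: "real^'n^'m" and M :: "real^'n^'n"
  assumes iM: "invertible M"
  shows "col_space (A ** M) = col_space A"
proof -
  have M1: "M ** matrix_inv M = mat 1" using minv_props[OF iM] by auto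
  show ?thesis unfolding col_space_def
  proof (intro set_eqI iffI)
    fix y assume "y \<in> range ((*v) (A ** M))"
    then obtain x where "y = (A ** M) *v x" by auto
    thus "y \<in> range ((*v) A)" by (simp flip: matrix_vector_mul_assoc)
  next
    fix y assume "y \<in> range ((*v) A)"
    then obtain x where x: "y = A *v x" by auto
    have "(A ** M) *v (matrix_inv M *v x) = y"
      by (simp add: x matrix_vector_mul_assoc flip: matrix_mul_assoc) (simp add: M1)
    thus "y \<in> range ((*v) (A ** M))" by (metis rangeI)
  qed
qed

lemma zero_rows_mv: "(zero_rows S A *v v) $ k = (if k \<in> S then 0 else (A *v v) $ k)"
  by (simp add: zero_rows_def matrix_vector_mult_def)

lemma mv_single:
  assumes "\<And>k. k \<noteq> i \<Longrightarrow> y $ k = 0"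
  shows "((A::real^'n^'m) *v y) $ j = A $ j $ i * y $ i"
proof -
  have "(A *v y) $ j = (\<Sum>k\<in>UNIV. A $ j $ k * y $ k)" by (simp add: matrix_vector_mult_def)
  also have "\<dots> = (\<Sum>k\<in>UNIV. if k = i then A $ j $ i * y $ i else 0)"
    by (rule sum.cong) (auto simp: assms)
  finally show ?thesis by simp
qed

lemma loses_rank_diag:
  fixes H :: "real^'n^'m" assumes injH: "inj ((*v) H)"
    and lr: "loses_rank_without_row H i"
  shows "resid_proj H $ i $ i = 0"
proof -
  obtain v where v0: "v \<noteq> 0" and zv: "zero_rows {i} H *v v = 0"
    using lr matrix_nonfull_linear_equations_eq unfolding loses_rank_without_row_def full_col_rank_def
    by blast
  define y where "y = H *v v"
  have y0: "y \<noteq> 0" using v0 injD[OF injH, of v 0] unfolding y_def by auto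
  have yk: "y $ k = 0" if "k \<noteq> i" for k
    using arg_cong[OF zv, of "\<lambda>z. z $ k"] that unfolding zero_rows_mv y_def by simp
  have yi: "y $ i \<noteq> 0" using y0 yk by (metis vec_eq_iff zero_index)
  have "resid_proj H *v y = 0"
    unfolding y_def by (simp add: matrix_vector_mul_assoc proj_facts(1)[OF injH])
  hence "resid_proj H $ i $ i * y $ i = 0"
    using mv_single[of i y "resid_proj H" i, OF yk] by (metis zero_index)
  thus ?thesis using yi by simp
qed

lemma diag_nonpos_row:
  fixes H :: "real^'n^'m" assumes injH: "inj ((*v) H)"
    and le: "resid_proj H $ i $ i \<le> 0"
  shows "(resid_proj H *v a) $ i = 0"
proof -
  have "(\<Sum>k\<in>UNIV. (resid_proj H $ i $ k)^2) = 0"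
    using le diag_sq[OF injH, of i] by (metis antisym sum_nonneg zero_le_power2)
  hence "\<forall>k\<in>UNIV. (resid_proj H $ i $ k)^2 = 0"
    by (subst (asm) sum_nonneg_eq_0_iff) auto
  thus ?thesis by (simp add: matrix_vector_mult_def)
qed

lemma diag_mv:
  assumes "\<And>j. j \<noteq> i \<Longrightarrow> D $ i $ j = 0"
  shows "(((D::real^'m^'m) ** W) *v y) $ i = D $ i $ i * (W *v y) $ i"
proof -
  have "((D ** W) *v y) $ i = (D *v (W *v y)) $ i" by (simp add: matrix_vector_mul_assoc)
  also have "\<dots> = (\<Sum>j\<in>UNIV. D $ i $ j * (W *v y) $ j)" by (simp only: matrix_vector_mult_def vec_lambda_beta)
  also have "\<dots> = (\<Sum>j\<in>UNIV. if j = i then D $ i $ i * (W *v y) $ i else 0)"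
    by (rule sum.cong) (auto simp: assms)
  finally show ?thesis by simp
qed

lemma omega_rel:
  fixes H :: "real^'n^'m" assumes injH: "inj ((*v) H)" and sp: "\<sigma> > 0"
  shows "(((Omega \<sigma> H ** resid_proj H) *v b) $ i)^2
     = (((Omega_tilde (resid_proj H) ** resid_proj H) *v b) $ i)^2 / \<sigma>^2"
proof -
  let ?W = "resid_proj H"
  have d1: "((Omega \<sigma> H ** ?W) *v b) $ i = Omega \<sigma> H $ i $ i * (?W *v b) $ i"
    by (rule diag_mv) (simp add: Omega_def)
  have d2: "((Omega_tilde ?W ** ?W) *v b) $ i = Omega_tilde ?W $ i $ i * (?W *v b) $ i"
    by (rule diag_mv) (simp add: Omega_tilde_def)
  show ?thesis
  proof (cases "?W $ i $ i > 0")
    case True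
    hence nl: "\<not> loses_rank_without_row H i" using loses_rank_diag[OF injH] by force
    have "Omega \<sigma> H $ i $ i = 1 / sqrt (\<sigma>^2 * ?W $ i $ i)" using nl by (simp add: Omega_def)
    moreover have "Omega_tilde ?W $ i $ i = 1 / sqrt (?W $ i $ i)" using True by (simp add: Omega_tilde_def)
    ultimately show ?thesis unfolding d1 d2 using True sp
      by (simp add: power_mult_distrib power_divide real_sqrt_mult)
  next
    case False
    hence "(?W *v b) $ i = 0" using diag_nonpos_row[OF injH] by simp
    thus ?thesis unfolding d1 d2 by simp
  qed
qed



lemma P1_decomp:
  fixes H :: "real^'n^'m" and x :: "real^'n" and SF :: "'m set"
  assumes injH: "inj ((*v) H)" and sp: "\<sigma> > 0"
  shows "\<exists>K. \<forall>b. P1_obj \<sigma> H x SF b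
     = K + sel_norm2 SF ((Omega_tilde (resid_proj H) ** resid_proj H) *v b) / \<sigma>^2"
proof -
  define T where "T = Omega \<sigma> H ** resid_proj H"
  define K where "K = integral\<^sup>L (noise_measure \<sigma> :: ('m \<Rightarrow> real) measure)
           (\<lambda>e. \<Sum>i\<in>SF. (\<Sum>j\<in>UNIV. T $ i $ j * e j)^2)"
  have THx: "T *v (H *v x) = 0"
    unfolding T_def by (simp add: matrix_vector_mul_assoc flip: matrix_mul_assoc add: proj_facts(1)[OF injH])
  have comp: "(T *v (H *v x + vec_lambda e + b)) $ i = (\<Sum>j\<in>UNIV. T $ i $ j * e j) + (T *v b) $ i" for e i b
  proof -
    have "T *v (H *v x + vec_lambda e + b) = T *v vec_lambda e + T *v b"
      by (simp add: matrix_vector_right_distrib THx)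
    thus ?thesis by (simp add: matrix_vector_mult_def)
  qed
  have "P1_obj \<sigma> H x SF b = K + sel_norm2 SF ((Omega_tilde (resid_proj H) ** resid_proj H) *v b) / \<sigma>^2" for b
  proof -
    have "P1_obj \<sigma> H x SF b = integral\<^sup>L (noise_measure \<sigma> :: ('m \<Rightarrow> real) measure)
           (\<lambda>e. \<Sum>i\<in>SF. ((\<Sum>j\<in>UNIV. T $ i $ j * e j) + (T *v b) $ i)^2)"
      unfolding P1_obj_def T_def[symmetric]
      by (rule Bochner_Integration.integral_cong) (simp_all add: comp)
    also have "\<dots> = K + (\<Sum>i\<in>SF. ((T *v b) $ i)^2)"
      unfolding K_def by (rule noise_quad[OF sp]) simp
    also have "(\<Sum>i\<in>SF. ((T *v b) $ i)^2)
       = (\<Sum>i\<in>SF. (((Omega_tilde (resid_proj H) ** resid_proj H) *v b) $ i)^2 / \<sigma>^2)"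
      unfolding T_def by (rule sum.cong) (auto simp: omega_rel[OF injH sp])
    also have "\<dots> = sel_norm2 SF ((Omega_tilde (resid_proj H) ** resid_proj H) *v b) / \<sigma>^2"
      unfolding sel_norm2_def by (simp add: sum_divide_distrib)
    finally show ?thesis .
  qed
  thus ?thesis by blast
qed

theorem theorem4:
  fixes H U :: "real^'n^'m" and x :: "real^'n" and \<sigma> :: real
    and SA SF :: "'m set" and a :: "real^'m"
  assumes "full_col_rank H"
    and "SA \<inter> SF = {}"
    and "\<sigma> > 0"
    and "rank U = CARD('n)" and "col_space U = col_space H"
  shows "is_max_sol (\<lambda>b. sel_norm2 SF ((Omega_tilde (resid_proj U) ** resid_proj U) *v b))
           ({b. norm b ^ 2 = 1} \<inter> col_space (zero_rows SF U) \<inter> attack_space SA) a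
     \<longleftrightarrow>
         is_max_sol (P1_obj \<sigma> H x SF)
           ({b. norm b ^ 2 = 1} \<inter> col_space (zero_rows SF H) \<inter> attack_space SA) a"
proof -
  have injH: "inj ((*v) H)" using assms(1) full_rank_injective unfolding full_col_rank_def by blast
  obtain M where iM: "invertible M" and UHM: "U = H ** M"
    using U_factor[OF injH assms(4) assms(5)] by blast
  have W: "resid_proj U = resid_proj H" unfolding UHM by (rule resid_proj_mult[OF injH iM])
  have C: "col_space (zero_rows SF U) = col_space (zero_rows SF H)"
    unfolding UHM zero_rows_mult by (rule col_space_mult[OF iM])
  obtain K where K: "\<And>b. P1_obj \<sigma> H x SF b
     = K + sel_norm2 SF ((Omega_tilde (resid_proj H) ** resid_proj H) *v b) / \<sigma>^2"
    using P1_decomp[OF injH assms(3), of x SF] by blast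
  define f where "f = (\<lambda>b. sel_norm2 SF ((Omega_tilde (resid_proj H) ** resid_proj H) *v b))"
  have s2: "\<sigma>^2 > 0" using assms(3) by simp
  have mono: "P1_obj \<sigma> H x SF b \<le> P1_obj \<sigma> H x SF c \<longleftrightarrow> f b \<le> f c" for b c
    unfolding K f_def using s2 by (simp add: divide_le_cancel)
  show ?thesis
    unfolding W C is_max_sol_def f_def[symmetric] using mono by auto
qed

end
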